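(* For every integer $m\geq 1$, $$A_{2,m}=\frac{(m-1)m(m+1)(m+\lambda)(m+\lambda+1)(m+\lambda+2)\big[m^2+(\lambda+1)m+\frac{4\lambda^2+2\lambda-14}{3(2\lambda+3)}\big]}{2(2\lambda+1)(2\lambda+5)}$$ and $$\widetilde A_{2,m}=\frac{(m-1)m(m+\lambda)(m+\lambda+1)\,r_\lambda(m)}{24(2\lambda+1)(2\lambda+3)(2\lambda+5)},$$ where $$r_\lambda(m)=12(2\lambda+3)m^4+24\lambda(2\lambda+3)m^3+4(6\lambda^3+7\lambda^2-19\lambda-32)m^2-4\lambda(2\lambda^2+19\lambda+32)m-8\lambda^3-20\lambda^2+14\lambda+71.$$
   Context: Fix $\lambda>-1/2$. Define polynomials $Q_m$ by $Q_0=1$, $Q_1(\mu)=1-\frac{2(\lambda+1)(\lambda+2)}{2\lambda+1}\mu$ and, for $m\geq2$, $$Q_m-Q_{m-1}=\frac{m(2m-1)(2m+\lambda)}{(m-1+\lambda)(2m-2+\lambda)(2m-1+2\lambda)}\big[Q_{m-1}-Q_{m-2}\big]-\frac{2m(2m-1+\lambda)(2m+\lambda)}{2m-1+2\lambda}\,\mu\,Q_{m-1}(\mu).$$ Define $\widetilde Q_m$ by $\widetilde Q_0=1$, $\widetilde Q_1(\mu)=1-\frac{\lambda+1}{2}\mu$ and, for $m\geq2$, $$\widetilde Q_m-\widetilde Q_{m-1}=\frac{(m-1)(2m-1)(2m-1+\lambda)}{(m-1+\lambda)(2m-3+\lambda)(2m-3+2\lambda)}\big[\widetilde Q_{m-1}-\widetilde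 Q_{m-2}\big]-\frac{(2m-1)(2m-2+\lambda)(2m-1+\lambda)}{2(m-1+\lambda)}\,\mu\,\widetilde Q_{m-1}(\mu).$$ Write $Q_m(\mu)=\sum_{i=0}^m(-1)^iA_{i,m}\mu^i$ and $\widetilde Q_m(\mu)=\sum_{i=0}^m(-1)^i\widetilde A_{i,m}\mu^i$, with $A_{i,m}=\widetilde A_{i,m}=0$ for $i>m$. *)

theory Defs
  imports "HOL-Computational_Algebra.Polynomial"
begin

text \<open>The polynomials Q_m (in the variable mu), parameter l = lambda.
  Q l (Suc (Suc n)) is Q_m with m = n + 2.\<close>
fun Qpoly :: "real \<Rightarrow> nat \<Rightarrow> real poly" where
  "Qpoly l 0 = 1"
| "Qpoly l (Suc 0) = [:1, - (2 * (l + 1) * (l + 2) / (2 * l + 1)):]"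
| "Qpoly l (Suc (Suc n)) =
     (let m = real n + 2 in
      Qpoly l (Suc n)
      + smult (m * (2*m - 1) * (2*m + l) / ((m - 1 + l) * (2*m - 2 + l) * (2*m - 1 + 2*l)))
              (Qpoly l (Suc n) - Qpoly l n)
      - smult (2 * m * (2*m - 1 + l) * (2*m + l) / (2*m - 1 + 2*l))
              (monom 1 1 * Qpoly l (Suc n)))"

fun Qtpoly :: "real \<Rightarrow> nat \<Rightarrow> real poly" where
  "Qtpoly l 0 = 1"
| "Qtpoly l (Suc 0) = [:1, - ((l + 1) / 2):]"
| "Qtpoly l (Suc (Suc n)) =
     (let m = real n + 2 in
      Qtpoly l (Suc n)
      + smult ((m - 1) * (2*m - 1) * (2*m - 1 + l) / ((m - 1 + l) * (2*m - 3 + l) * (2*m - 3 + 2*l)))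
              (Qtpoly l (Suc n) - Qtpoly l n)
      - smult ((2*m - 1) * (2*m - 2 + l) * (2*m - 1 + l) / (2 * (m - 1 + l)))
              (monom 1 1 * Qtpoly l (Suc n)))"

definition Acoef :: "real \<Rightarrow> nat \<Rightarrow> nat \<Rightarrow> real" where
  "Acoef l i m = (-1) ^ i * coeff (Qpoly l m) i"

definition Atcoef :: "real \<Rightarrow> nat \<Rightarrow> nat \<Rightarrow> real" where
  "Atcoef l i m = (-1) ^ i * coeff (Qtpoly l m) i"

definition r_lam :: "real \<Rightarrow> real \<Rightarrow> real" where
  "r_lam l m = 12*(2*l+3)*m^4 + 24*l*(2*l+3)*m^3 + 4*(6*l^3 + 7*l^2 - 19*l - 32)*m^2
     - 4*l*(2*l^2 + 19*l + 32)*m - 8*l^3 - 20*l^2 + 14*l + 71"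

end

theory Submission
  imports Defs
begin

lemma coeffQ: "coeff (Qpoly l (Suc (Suc n))) i =
   (let m = real n + 2 in coeff (Qpoly l (Suc n)) i
      + (m * (2*m - 1) * (2*m + l) / ((m - 1 + l) * (2*m - 2 + l) * (2*m - 1 + 2*l))) * (coeff (Qpoly l (Suc n)) i - coeff (Qpoly l n) i)
      - (2 * m * (2*m - 1 + l) * (2*m + l) / (2*m - 1 + 2*l)) * (if i = 0 then 0 else coeff (Qpoly l (Suc n)) (i - 1)))"
  by (cases i) (simp_all add: Let_def coeff_monom_mult)

lemma coeffQt: "coeff (Qtpoly l (Suc (Suc n))) i =
   (let m = real n + 2 in coeff (Qtpoly l (Suc n)) i
      + ((m - 1) * (2*m - 1) * (2*m - 1 + l) / ((m - 1 + l) * (2*m - 3 + l) * (2*m - 3 + 2*l))) * (coeff (Qtpoly l (Suc n)) i - coeff (Qtpoly l n) i)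
      - ((2*m - 1) * (2*m - 2 + l) * (2*m - 1 + l) / (2 * (m - 1 + l))) * (if i = 0 then 0 else coeff (Qtpoly l (Suc n)) (i - 1)))"
  by (cases i) (simp_all add: Let_def coeff_monom_mult)

lemma gen: fixes Da a b Na Nb C D E :: real
  assumes "Da*a = Na" "Da*b = Nb" shows "Da*(C + a*D - b*E) = Da*C + Na*D - Nb*E"
proof -
  have "Da*(C+a*D-b*E) = Da*C + (Da*a)*D - (Da*b)*E" by (simp add: algebra_simps)
  then show ?thesis using assms by simp
qed

lemma recQ:
  fixes l :: real and n :: nat assumes "l > -1/2"
  defines "m \<equiv> real n + 2"
  shows "(m - 1 + l) * (2*m - 2 + l) * (2*m - 1 + 2*l) * coeff (Qpoly l (Suc (Suc n))) i
   = (m - 1 + l) * (2*m - 2 + l) * (2*m - 1 + 2*l) * coeff (Qpoly l (Suc n)) i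
     + m * (2*m - 1) * (2*m + l) * (coeff (Qpoly l (Suc n)) i - coeff (Qpoly l n) i)
     - 2 * m * (2*m - 1 + l) * (2*m + l) * (m - 1 + l) * (2*m - 2 + l)
        * (if i = 0 then 0 else coeff (Qpoly l (Suc n)) (i - 1))"
proof -
  have x: "m \<ge> 2" unfolding m_def by simp
  have "m - 1 + l \<noteq> 0" "2*m - 2 + l \<noteq> 0" "2*m - 1 + 2*l \<noteq> 0" using assms x by auto
  then show ?thesis unfolding coeffQ Let_def m_def[symmetric] by (intro gen) (simp_all add: ac_simps)
qed

lemma recQt:
  fixes l :: real and n :: nat assumes "l > -1/2"
  defines "m \<equiv> real n + 2"
  shows "(m - 1 + l) * (2*m - 3 + l) * (2*m - 3 + 2*l) * coeff (Qtpoly l (Suc (Suc n))) i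
   = (m - 1 + l) * (2*m - 3 + l) * (2*m - 3 + 2*l) * coeff (Qtpoly l (Suc n)) i
     + (m - 1) * (2*m - 1) * (2*m - 1 + l) * (coeff (Qtpoly l (Suc n)) i - coeff (Qtpoly l n) i)
     - (2*m - 1) * (2*m - 2 + l) * (2*m - 1 + l) * (2*m - 3 + l) * (2*m - 3 + 2*l) / 2
        * (if i = 0 then 0 else coeff (Qtpoly l (Suc n)) (i - 1))"
proof -
  have x: "m \<ge> 2" unfolding m_def by simp
  have "m - 1 + l \<noteq> 0" "2*(m - 1 + l) \<noteq> 0" "2*m - 3 + l \<noteq> 0" "2*m - 3 + 2*l \<noteq> 0" using assms x by auto
  note nz = this
  have hb: "((m - 1 + l) * (2*m - 3 + l) * (2*m - 3 + 2*l)) * ((2*m - 1) * (2*m - 2 + l) * (2*m - 1 + l) / (2 * (m - 1 + l)))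
     = (2*m - 1) * (2*m - 2 + l) * (2*m - 1 + l) * (2*m - 3 + l) * (2*m - 3 + 2*l) / 2"
    using nz(1) by (simp add: field_simps)
  show ?thesis unfolding coeffQt Let_def m_def[symmetric] by (intro gen[OF _ hb]) (use nz in \<open>simp_all add: ac_simps\<close>)
qed


declare Qpoly.simps(3)[simp del] Qtpoly.simps(3)[simp del]

lemma cancelD: fixes D X Y :: real shows "D \<noteq> 0 \<Longrightarrow> D*X = D*Y \<Longrightarrow> X = Y" by simp

lemma two_step: assumes "P 0" "P (Suc 0)" "\<And>n. P n \<Longrightarrow> P (Suc n) \<Longrightarrow> P (Suc (Suc n))"
  shows "P n"
proof -
  have "P n \<and> P (Suc n)" by (induction n) (use assms in auto)
  then show ?thesis by simp
qed

definition HA :: "real \<Rightarrow> real \<Rightarrow> real" where "HA l m = m*(m+1)*(m+l)*(m+l+1)"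
definition GA :: "real \<Rightarrow> real \<Rightarrow> real" where
  "GA l m = (m - 1) * m * (m + 1) * (m + l) * (m + l + 1) * (m + l + 2) * (3*(2*l+3)*(m^2 + (l+1)*m) + 4*l^2+2*l-14)"
definition HB :: "real \<Rightarrow> real \<Rightarrow> real" where "HB l m = m*(m+l)*(2*m^2+2*l*m-1)"
definition GB :: "real \<Rightarrow> real \<Rightarrow> real" where
  "GB l m = (m - 1) * m * (m + l) * (m + l + 1) * r_lam l m"

lemma cQ0: assumes "l > -1/2" shows "coeff (Qpoly l n) 0 = 1"
proof (induction n rule: two_step)
  case (3 n)
  define m where "m = real n + 2"
  have "m \<ge> 2" unfolding m_def by simp
  then have nz: "(m - 1 + l) * (2*m - 2 + l) * (2*m - 1 + 2*l) \<noteq> 0" using assms by auto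
  have "(m - 1 + l) * (2*m - 2 + l) * (2*m - 1 + 2*l) * coeff (Qpoly l (Suc (Suc n))) 0 = (m - 1 + l) * (2*m - 2 + l) * (2*m - 1 + 2*l) * 1"
    using recQ[OF assms, of n 0] 3 unfolding m_def by simp
  then show ?case using nz by simp
qed auto

lemma cQt0: assumes "l > -1/2" shows "coeff (Qtpoly l n) 0 = 1"
proof (induction n rule: two_step)
  case (3 n)
  define m where "m = real n + 2"
  have "m \<ge> 2" unfolding m_def by simp
  then have nz: "(m - 1 + l) * (2*m - 3 + l) * (2*m - 3 + 2*l) \<noteq> 0" using assms by auto
  have "(m - 1 + l) * (2*m - 3 + l) * (2*m - 3 + 2*l) * coeff (Qtpoly l (Suc (Suc n))) 0 = (m - 1 + l) * (2*m - 3 + l) * (2*m - 3 + 2*l) * 1"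
    using recQt[OF assms, of n 0] 3 unfolding m_def by simp
  then show ?case using nz by simp
qed auto

lemma cQ1: assumes "l > -1/2" shows "(2*l+1) * coeff (Qpoly l n) 1 = - HA l (real n)"
proof (induction n rule: two_step)
  case 1 then show ?case by (simp add: HA_def)
next
  case 2 have "2*l+1 \<noteq> 0" using assms by simp
  then show ?case by (simp add: HA_def field_simps)
next
  case (3 n)
  define m where "m = real n + 2"
  have "m \<ge> 2" unfolding m_def by simp
  then have nz: "(m - 1 + l) * (2*m - 2 + l) * (2*m - 1 + 2*l) \<noteq> 0" using assms by auto
  have R: "(m - 1 + l) * (2*m - 2 + l) * (2*m - 1 + 2*l) * coeff (Qpoly l (Suc (Suc n))) 1
   = (m - 1 + l) * (2*m - 2 + l) * (2*m - 1 + 2*l) * coeff (Qpoly l (Suc n)) 1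
     + m * (2*m - 1) * (2*m + l) * (coeff (Qpoly l (Suc n)) 1 - coeff (Qpoly l n) 1)
     - 2 * m * (2*m - 1 + l) * (2*m + l) * (m - 1 + l) * (2*m - 2 + l) * 1"
    using recQ[OF assms, of n 1] cQ0[OF assms] unfolding m_def by simp
  have "(m - 1 + l) * (2*m - 2 + l) * (2*m - 1 + 2*l) * ((2*l+1) * coeff (Qpoly l (Suc (Suc n))) 1)
   = (m - 1 + l) * (2*m - 2 + l) * (2*m - 1 + 2*l) * ((2*l+1) * coeff (Qpoly l (Suc n)) 1)
     + m * (2*m - 1) * (2*m + l) * ((2*l+1) * coeff (Qpoly l (Suc n)) 1 - (2*l+1) * coeff (Qpoly l n) 1)
     - 2 * m * (2*m - 1 + l) * (2*m + l) * (m - 1 + l) * (2*m - 2 + l) * (2*l+1)"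
    using arg_cong[OF R, of "\<lambda>t. (2*l+1)*t"] by (simp add: algebra_simps)
  also have "\<dots> = (m - 1 + l) * (2*m - 2 + l) * (2*m - 1 + 2*l) * (- HA l (m - 1))
     + m * (2*m - 1) * (2*m + l) * (- HA l (m - 1) + HA l (m - 2))
     - 2 * m * (2*m - 1 + l) * (2*m + l) * (m - 1 + l) * (2*m - 2 + l) * (2*l+1)"
    using 3 unfolding m_def by simp
  also have "\<dots> = (m - 1 + l) * (2*m - 2 + l) * (2*m - 1 + 2*l) * (- HA l m)"
    unfolding HA_def by algebra
  finally have "(2*l+1) * coeff (Qpoly l (Suc (Suc n))) 1 = - HA l m" by (rule cancelD[OF nz])
  moreover have "real (Suc (Suc n)) = m" unfolding m_def by simp
  ultimately show ?case by simp
qed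

lemma cQ2: assumes "l > -1/2" shows "(6*(2*l+1)*(2*l+3)*(2*l+5)) * coeff (Qpoly l n) 2 = GA l (real n)"
proof (induction n rule: two_step)
  case 1 then show ?case by (simp add: GA_def)
next
  case 2 have "coeff (Qpoly l (Suc 0)) 2 = 0" by (simp add: numeral_2_eq_2)
    then show ?case by (simp add: GA_def)
next
  case (3 n)
  define m where "m = real n + 2"
  define K where "K = 6*(2*l+1)*(2*l+3)*(2*l+5)"
  have "m \<ge> 2" unfolding m_def by simp
  then have nz: "(m - 1 + l) * (2*m - 2 + l) * (2*m - 1 + 2*l) \<noteq> 0" using assms by auto
  have c1a: "K * coeff (Qpoly l (Suc n)) 1 = 6*(2*l+3)*(2*l+5) * ((2*l+1) * coeff (Qpoly l (Suc n)) 1)"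
    unfolding K_def by (simp only: mult_ac)
  have hs: "real (Suc n) = m - 1" unfolding m_def by simp
  have c1: "K * coeff (Qpoly l (Suc n)) 1 = - 6*(2*l+3)*(2*l+5) * HA l (m - 1)"
    unfolding c1a cQ1[OF assms, of "Suc n", unfolded hs] by (simp add: algebra_simps)
  have R: "(m - 1 + l) * (2*m - 2 + l) * (2*m - 1 + 2*l) * coeff (Qpoly l (Suc (Suc n))) 2
   = (m - 1 + l) * (2*m - 2 + l) * (2*m - 1 + 2*l) * coeff (Qpoly l (Suc n)) 2
     + m * (2*m - 1) * (2*m + l) * (coeff (Qpoly l (Suc n)) 2 - coeff (Qpoly l n) 2)
     - 2 * m * (2*m - 1 + l) * (2*m + l) * (m - 1 + l) * (2*m - 2 + l) * coeff (Qpoly l (Suc n)) 1"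
    using recQ[OF assms, of n 2] unfolding m_def by simp
  have "(m - 1 + l) * (2*m - 2 + l) * (2*m - 1 + 2*l) * (K * coeff (Qpoly l (Suc (Suc n))) 2)
   = (m - 1 + l) * (2*m - 2 + l) * (2*m - 1 + 2*l) * (K * coeff (Qpoly l (Suc n)) 2)
     + m * (2*m - 1) * (2*m + l) * (K * coeff (Qpoly l (Suc n)) 2 - K * coeff (Qpoly l n) 2)
     - 2 * m * (2*m - 1 + l) * (2*m + l) * (m - 1 + l) * (2*m - 2 + l) * (K * coeff (Qpoly l (Suc n)) 1)"
    using arg_cong[OF R, of "\<lambda>t. K*t"] by (simp add: algebra_simps)
  also have "\<dots> = (m - 1 + l) * (2*m - 2 + l) * (2*m - 1 + 2*l) * GA l (m - 1)
     + m * (2*m - 1) * (2*m + l) * (GA l (m - 1) - GA l (m - 2))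
     - 2 * m * (2*m - 1 + l) * (2*m + l) * (m - 1 + l) * (2*m - 2 + l) * (- 6*(2*l+3)*(2*l+5) * HA l (m - 1))"
    using 3 c1 unfolding m_def K_def by simp
  also have "\<dots> = (m - 1 + l) * (2*m - 2 + l) * (2*m - 1 + 2*l) * GA l m"
    unfolding HA_def GA_def by algebra
  finally have "K * coeff (Qpoly l (Suc (Suc n))) 2 = GA l m" by (rule cancelD[OF nz])
  moreover have "real (Suc (Suc n)) = m" unfolding m_def by simp
  ultimately show ?case unfolding K_def by simp
qed


lemma cQt1: assumes "l > -1/2" shows "(2*(2*l+1)) * coeff (Qtpoly l n) 1 = - HB l (real n)"
proof (induction n rule: two_step)
  case 1 then show ?case by (simp add: HB_def)
next
  case 2 show ?case by (simp add: HB_def field_simps)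
next
  case (3 n)
  define m where "m = real n + 2"
  define K where "K = 2*(2*l+1)"
  have "m \<ge> 2" unfolding m_def by simp
  then have nz: "(m - 1 + l) * (2*m - 3 + l) * (2*m - 3 + 2*l) \<noteq> 0" using assms by auto
  have R: "(m - 1 + l) * (2*m - 3 + l) * (2*m - 3 + 2*l) * coeff (Qtpoly l (Suc (Suc n))) 1
   = (m - 1 + l) * (2*m - 3 + l) * (2*m - 3 + 2*l) * coeff (Qtpoly l (Suc n)) 1
     + (m - 1) * (2*m - 1) * (2*m - 1 + l) * (coeff (Qtpoly l (Suc n)) 1 - coeff (Qtpoly l n) 1)
     - (2*m - 1) * (2*m - 2 + l) * (2*m - 1 + l) * (2*m - 3 + l) * (2*m - 3 + 2*l) / 2 * 1"
    using recQt[OF assms, of n 1] cQt0[OF assms] unfolding m_def by simp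
  have "(m - 1 + l) * (2*m - 3 + l) * (2*m - 3 + 2*l) * (K * coeff (Qtpoly l (Suc (Suc n))) 1)
   = (m - 1 + l) * (2*m - 3 + l) * (2*m - 3 + 2*l) * (K * coeff (Qtpoly l (Suc n)) 1)
     + (m - 1) * (2*m - 1) * (2*m - 1 + l) * (K * coeff (Qtpoly l (Suc n)) 1 - K * coeff (Qtpoly l n) 1)
     - (2*m - 1) * (2*m - 2 + l) * (2*m - 1 + l) * (2*m - 3 + l) * (2*m - 3 + 2*l) / 2 * K"
    using arg_cong[OF R, of "\<lambda>t. K*t"] by (simp add: algebra_simps)
  also have "\<dots> = (m - 1 + l) * (2*m - 3 + l) * (2*m - 3 + 2*l) * (- HB l (m - 1))
     + (m - 1) * (2*m - 1) * (2*m - 1 + l) * (- HB l (m - 1) + HB l (m - 2))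
     - (2*m - 1) * (2*m - 2 + l) * (2*m - 1 + l) * (2*m - 3 + l) * (2*m - 3 + 2*l) / 2 * (2*(2*l+1))"
    using 3 unfolding m_def K_def by simp
  also have "\<dots> = (m - 1 + l) * (2*m - 3 + l) * (2*m - 3 + 2*l) * (- HB l m)"
    unfolding HB_def by algebra
  finally have "K * coeff (Qtpoly l (Suc (Suc n))) 1 = - HB l m" by (rule cancelD[OF nz])
  moreover have "real (Suc (Suc n)) = m" unfolding m_def by simp
  ultimately show ?case unfolding K_def by simp
qed

lemma cQt2: assumes "l > -1/2" shows "(24*(2*l+1)*(2*l+3)*(2*l+5)) * coeff (Qtpoly l n) 2 = GB l (real n)"
proof (induction n rule: two_step)
  case 1 then show ?case by (simp add: GB_def)
next
  case 2 have "coeff (Qtpoly l (Suc 0)) 2 = 0" by (simp add: numeral_2_eq_2)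
    then show ?case by (simp add: GB_def)
next
  case (3 n)
  define m where "m = real n + 2"
  define K where "K = 24*(2*l+1)*(2*l+3)*(2*l+5)"
  have "m \<ge> 2" unfolding m_def by simp
  then have nz: "(m - 1 + l) * (2*m - 3 + l) * (2*m - 3 + 2*l) \<noteq> 0" using assms by auto
  have c1a: "K * coeff (Qtpoly l (Suc n)) 1 = 12*(2*l+3)*(2*l+5) * ((2*(2*l+1)) * coeff (Qtpoly l (Suc n)) 1)"
    unfolding K_def by (simp only: mult_ac)
  have hs: "real (Suc n) = m - 1" unfolding m_def by simp
  have c1: "K * coeff (Qtpoly l (Suc n)) 1 = - 12*(2*l+3)*(2*l+5) * HB l (m - 1)"
    unfolding c1a cQt1[OF assms, of "Suc n", unfolded hs] by (simp add: algebra_simps)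
  have R: "(m - 1 + l) * (2*m - 3 + l) * (2*m - 3 + 2*l) * coeff (Qtpoly l (Suc (Suc n))) 2
   = (m - 1 + l) * (2*m - 3 + l) * (2*m - 3 + 2*l) * coeff (Qtpoly l (Suc n)) 2
     + (m - 1) * (2*m - 1) * (2*m - 1 + l) * (coeff (Qtpoly l (Suc n)) 2 - coeff (Qtpoly l n) 2)
     - (2*m - 1) * (2*m - 2 + l) * (2*m - 1 + l) * (2*m - 3 + l) * (2*m - 3 + 2*l) / 2 * coeff (Qtpoly l (Suc n)) 1"
    using recQt[OF assms, of n 2] unfolding m_def by simp
  have "(m - 1 + l) * (2*m - 3 + l) * (2*m - 3 + 2*l) * (K * coeff (Qtpoly l (Suc (Suc n))) 2)
   = (m - 1 + l) * (2*m - 3 + l) * (2*m - 3 + 2*l) * (K * coeff (Qtpoly l (Suc n)) 2)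
     + (m - 1) * (2*m - 1) * (2*m - 1 + l) * (K * coeff (Qtpoly l (Suc n)) 2 - K * coeff (Qtpoly l n) 2)
     - (2*m - 1) * (2*m - 2 + l) * (2*m - 1 + l) * (2*m - 3 + l) * (2*m - 3 + 2*l) / 2 * (K * coeff (Qtpoly l (Suc n)) 1)"
    using arg_cong[OF R, of "\<lambda>t. K*t"] by (simp add: algebra_simps)
  also have "\<dots> = (m - 1 + l) * (2*m - 3 + l) * (2*m - 3 + 2*l) * GB l (m - 1)
     + (m - 1) * (2*m - 1) * (2*m - 1 + l) * (GB l (m - 1) - GB l (m - 2))
     - (2*m - 1) * (2*m - 2 + l) * (2*m - 1 + l) * (2*m - 3 + l) * (2*m - 3 + 2*l) / 2 * (- 12*(2*l+3)*(2*l+5) * HB l (m - 1))"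
  proof -
    have hs2: "real n = m - 2" unfolding m_def by simp
    have e1: "K * coeff (Qtpoly l n) 2 = GB l (m - 2)" using 3(1) unfolding K_def hs2 .
    have e2: "K * coeff (Qtpoly l (Suc n)) 2 = GB l (m - 1)" using 3(2) unfolding K_def hs .
    show ?thesis by (simp only: e1 e2 c1)
  qed
  also have "\<dots> = (m - 1 + l) * (2*m - 3 + l) * (2*m - 3 + 2*l) * GB l m"
    unfolding HB_def GB_def r_lam_def by algebra
  finally have "K * coeff (Qtpoly l (Suc (Suc n))) 2 = GB l m" by (rule cancelD[OF nz])
  moreover have "real (Suc (Suc n)) = m" unfolding m_def by simp
  ultimately show ?case unfolding K_def by simp
qed


theorem lemma3p4:
  fixes l :: real and m :: nat
  assumes "l > -1/2" and "m \<ge> 1"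
  shows "Acoef l 2 m =
           (real m - 1) * real m * (real m + 1) * (real m + l) * (real m + l + 1) * (real m + l + 2)
           * ((real m)^2 + (l + 1) * real m + (4*l^2 + 2*l - 14) / (3 * (2*l + 3)))
           / (2 * (2*l + 1) * (2*l + 5)) \<and>
         Atcoef l 2 m =
           (real m - 1) * real m * (real m + l) * (real m + l + 1) * r_lam l (real m)
           / (24 * (2*l + 1) * (2*l + 3) * (2*l + 5))"
proof
  have p: "2*l+1 > 0" "2*l+3 > 0" "2*l+5>0" using assms(1) by auto
  have A: "Acoef l 2 m = coeff (Qpoly l m) 2" unfolding Acoef_def by simp
  have "coeff (Qpoly l m) 2 = GA l (real m) / (6*(2*l+1)*(2*l+3)*(2*l+5))"
    using cQ2[OF assms(1), of m] p by (simp add: eq_divide_eq mult.commute)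
  also have "\<dots> = (real m - 1) * real m * (real m + 1) * (real m + l) * (real m + l + 1) * (real m + l + 2)
           * ((real m)^2 + (l + 1) * real m + (4*l^2 + 2*l - 14) / (3 * (2*l + 3)))
           / (2 * (2*l + 1) * (2*l + 5))"
    unfolding GA_def using p by (simp add: field_simps)
  finally show "Acoef l 2 m = (real m - 1) * real m * (real m + 1) * (real m + l) * (real m + l + 1) * (real m + l + 2)
           * ((real m)^2 + (l + 1) * real m + (4*l^2 + 2*l - 14) / (3 * (2*l + 3)))
           / (2 * (2*l + 1) * (2*l + 5))" using A by simp
next
  have p: "2*l+1 > 0" "2*l+3 > 0" "2*l+5>0" using assms(1) by auto
  have A: "Atcoef l 2 m = coeff (Qtpoly l m) 2" unfolding Atcoef_def by simp
  have "coeff (Qtpoly l m) 2 = GB l (real m) / (24 * (2*l + 1) * (2*l + 3) * (2*l + 5))"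
    using cQt2[OF assms(1), of m] p by (simp add: eq_divide_eq mult.commute)
  then show "Atcoef l 2 m =
           (real m - 1) * real m * (real m + l) * (real m + l + 1) * r_lam l (real m)
           / (24 * (2*l + 1) * (2*l + 3) * (2*l + 5))" using A unfolding GB_def by simp
qed

end
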